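(* Assume $n\ge 2d$, let $\widetilde X$ be a knockoff matrix with $X^\top\widetilde X=X^\top X-D$, set $\Delta=2D^{-1}$, and couple the two formulations via $\omega=D^{-1}(X-\widetilde X)^\top y-\widehat\beta$ (so that $\widetilde\beta=\widehat\beta+\omega=D^{-1}(X-\widetilde X)^\top y$ and $\xi=\Sigma^{-1}\widehat\beta-\Delta^{-1}\widetilde\beta=\tfrac12(X+\widetilde X)^\top y$). Then: (a) For any implementation of the whitening method with this $\Delta$ and this $\omega$, there exist $W$-statistics satisfying the unordered pair property such that the standard knockoff+ procedure with these $W$-statistics and the whitening method give identical rejection sets. (b) For any $W$-statistics satisfying the unordered pair property such that $|W_1|,\dots,|W_d|$ are almost surely positive and pairwise distinct, there exists an implementation of the whitening method with this $\Delta$ and this $\omega$ such that the two methods give identical rejection sets.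
   Context: Linear model: $X\in\mathbb R^{n\times d}$ of full column rank, $y=X\beta+\varepsilon$, $\varepsilon\sim\mathcal N_n(0,\sigma^2I_n)$; $\Sigma=(X^\top X)^{-1}$, $\widehat\beta=\Sigma X^\top y$. A knockoff matrix is $\widetilde X\in\mathbb R^{n\times d}$ with $\widetilde X^\top\widetilde X=X^\top X$ and $\widetilde X^\top X=X^\top X-D$, $D$ diagonal with positive diagonal entries and $D\preceq 2X^\top X$. $W$-statistics are functions $W=(W_1,\dots,W_d)$ of $([X\ \widetilde X],y)$; set $W_j^*=\operatorname{sgn}((X_j-\widetilde X_j)^\top y)W_j$. $W$ has the unordered pair property if (for fixed $X,\widetilde X$) $W^*$ depends on $y$ only through the unordered pairs $\{X_j^\top y,\widetilde X_j^\top y\}$, $j=1,\dots,d$. Standard knockoff+ procedure at level $\alpha\in(0,1)$: let $\hat t$ be the smallest $t\in\{|W_j|:|W_j|>0\}$ with $\frac{1+\#\{j:W_j\le -t\}}{\#\{j:W_j\ge t\}}\le\alpha$ ($\hat t=+\infty$ if none) and reject $H_j:\beta_j=0$ for all $j$ with $W_j\ge\hat t$. Whitening method at level $\alpha$ for a diagonal $\Delta\succeq\Sigma$ and noise $\omega\sim\mathcal N_d(0,\sigma^2(\Delta-\Sigma))$ independent of $\widehat\beta$: set $\widetilde\beta=\widehat\beta+\omega$, $\xi=\Sigma^{-1}\widehat\beta-\Delta^{-1}\widetilde\beta$. An implementation is a rule that, as a function of $(\xi,|\widetilde\beta|)$, outputs an ordering $[1],\dots,[d]$ of $\{1,\dots,d\}$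 and signs $\psi_1,\dots,\psi_d\in\{-1,+1\}$. Put $\widetilde p_j=1/2$ if $\operatorname{sgn}(\widetilde\beta_j)=\psi_j$ and $\widetilde p_j=1$ otherwise; $\widehat{\mathrm{FDP}}_k=\frac{1+\#\{j\le k:\widetilde p_{[j]}=1\}}{\#\{j\le k:\widetilde p_{[j]}=1/2\}}$ (equal to $+\infty$ if the denominator is $0$); $\hat k=\max\{k\le d:\widehat{\mathrm{FDP}}_k\le\alpha\}$ ($\hat k=0$ if none); reject $H_{[j]}$ for all $j\le\hat k$ with $\widetilde p_{[j]}=1/2$. *)

theory Defs
  imports "HOL-Analysis.Analysis" "HOL-Probability.Probability"
begin

definition diag_pos :: "real^'d^'d \<Rightarrow> bool" where
  "diag_pos D \<longleftrightarrow> (\<forall>i j. i \<noteq> j \<longrightarrow> D$i$j = 0) \<and> (\<forall>i. D$i$i > 0)"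

definition psd_le :: "real^'d^'d \<Rightarrow> real^'d^'d \<Rightarrow> bool" where
  "psd_le A B \<longleftrightarrow> (\<forall>v. v \<bullet> ((B - A) *v v) \<ge> 0)"

definition is_knockoff :: "real^'d^'n \<Rightarrow> real^'d^'n \<Rightarrow> real^'d^'d \<Rightarrow> bool" where
  "is_knockoff X Xk D \<longleftrightarrow>
     transpose Xk ** Xk = transpose X ** X \<and>
     transpose Xk ** X = transpose X ** X - D \<and>
     diag_pos D \<and> psd_le D (2 *\<^sub>R (transpose X ** X))"

definition Sigma_of :: "real^'d^'n \<Rightarrow> real^'d^'d" where
  "Sigma_of X = matrix_inv (transpose X ** X)"

definition betahat :: "real^'d^'n \<Rightarrow> real^'n \<Rightarrow> real^'d" where
  "betahat X y = Sigma_of X *v (transpose X *v y)"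

definition wh_betatilde :: "real^'d^'n \<Rightarrow> (real^'n \<Rightarrow> real^'d) \<Rightarrow> real^'n \<Rightarrow> real^'d" where
  "wh_betatilde X omega y = betahat X y + omega y"

definition wh_xi :: "real^'d^'n \<Rightarrow> real^'d^'d \<Rightarrow> (real^'n \<Rightarrow> real^'d) \<Rightarrow> real^'n \<Rightarrow> real^'d" where
  "wh_xi X Delta omega y =
     matrix_inv (Sigma_of X) *v betahat X y - matrix_inv Delta *v wh_betatilde X omega y"

definition Delta_of :: "real^'d^'d \<Rightarrow> real^'d^'d" where
  "Delta_of D = 2 *\<^sub>R matrix_inv D"

definition omega_of :: "real^'d^'n \<Rightarrow> real^'d^'n \<Rightarrow> real^'d^'d \<Rightarrow> real^'n \<Rightarrow> real^'d" where
  "omega_of X Xk D y = matrix_inv D *v (transpose (X - Xk) *v y) - betahat X y"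

definition wh_ptilde :: "('d \<Rightarrow> real) \<Rightarrow> real^'d \<Rightarrow> 'd \<Rightarrow> real" where
  "wh_ptilde psi bt j = (if sgn (bt $ j) = psi j then 1/2 else 1)"

definition wh_FDP :: "(nat \<Rightarrow> 'd) \<Rightarrow> ('d \<Rightarrow> real) \<Rightarrow> real^'d \<Rightarrow> nat \<Rightarrow> ereal" where
  "wh_FDP ord psi bt k =
     (let num = card {i \<in> {1..k}. wh_ptilde psi bt (ord i) = 1};
          den = card {i \<in> {1..k}. wh_ptilde psi bt (ord i) = 1/2}
      in if den = 0 then \<infinity> else ereal ((1 + real num) / real den))"

definition wh_khat :: "real \<Rightarrow> (nat \<Rightarrow> 'd::finite) \<Rightarrow> ('d \<Rightarrow> real) \<Rightarrow> real^'d \<Rightarrow> nat" where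
  "wh_khat alpha ord psi bt =
     Max (insert 0 {k. k \<le> CARD('d) \<and> wh_FDP ord psi bt k \<le> ereal alpha})"

definition wh_rej :: "real \<Rightarrow> (nat \<Rightarrow> 'd::finite) \<Rightarrow> ('d \<Rightarrow> real) \<Rightarrow> real^'d \<Rightarrow> 'd set" where
  "wh_rej alpha ord psi bt =
     {ord i | i. i \<in> {1..wh_khat alpha ord psi bt} \<and> wh_ptilde psi bt (ord i) = 1/2}"

text \<open>An implementation: ordering and signs as functions of (xi, |beta tilde|).\<close>

definition valid_impl ::
  "(real^'d \<Rightarrow> real^'d \<Rightarrow> (nat \<Rightarrow> 'd::finite)) \<Rightarrow> (real^'d \<Rightarrow> real^'d \<Rightarrow> ('d \<Rightarrow> real)) \<Rightarrow> bool" where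
  "valid_impl ord psi \<longleftrightarrow>
     (\<forall>a b. bij_betw (ord a b) {1..CARD('d)} UNIV \<and> (\<forall>j. psi a b j \<in> {-1, 1}))"

definition vabs :: "real^'d \<Rightarrow> real^'d" where
  "vabs v = (\<chi> j. \<bar>v $ j\<bar>)"

definition whitening_rej ::
  "real \<Rightarrow> real^'d^'n \<Rightarrow> real^'d^'d \<Rightarrow> (real^'n \<Rightarrow> real^'d)
   \<Rightarrow> (real^'d \<Rightarrow> real^'d \<Rightarrow> (nat \<Rightarrow> 'd::finite)) \<Rightarrow> (real^'d \<Rightarrow> real^'d \<Rightarrow> ('d \<Rightarrow> real))
   \<Rightarrow> real^'n \<Rightarrow> 'd set" where
  "whitening_rej alpha X Delta omega ord psi y =
     (let bt = wh_betatilde X omega y; xi = wh_xi X Delta omega y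
      in wh_rej alpha (ord xi (vabs bt)) (psi xi (vabs bt)) bt)"

definition kf_ok :: "real \<Rightarrow> real^'d \<Rightarrow> real \<Rightarrow> bool" where
  "kf_ok alpha W t \<longleftrightarrow>
     (let den = card {j. W $ j \<ge> t}
      in (if den = 0 then \<infinity> else ereal ((1 + real (card {j. W $ j \<le> - t})) / real den))
           \<le> ereal alpha)"

definition kf_rej :: "real \<Rightarrow> real^'d \<Rightarrow> 'd set" where
  "kf_rej alpha W =
     (let T = {\<bar>W $ j\<bar> | j. \<bar>W $ j\<bar> > 0}
      in if (\<exists>t\<in>T. kf_ok alpha W t)
         then {j. W $ j \<ge> Min {t \<in> T. kf_ok alpha W t}}
         else {})"

definition Wstar :: "real^'d^'n \<Rightarrow> real^'d^'n \<Rightarrow> (real^'n \<Rightarrow> real^'d) \<Rightarrow> real^'n \<Rightarrow> real^'d" where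
  "Wstar X Xk W y = (\<chi> j. sgn ((column j X - column j Xk) \<bullet> y) * W y $ j)"

definition unordered_pair_prop :: "real^'d^'n \<Rightarrow> real^'d^'n \<Rightarrow> (real^'n \<Rightarrow> real^'d) \<Rightarrow> bool" where
  "unordered_pair_prop X Xk W \<longleftrightarrow>
     (\<forall>y y'. (\<forall>j. {column j X \<bullet> y, column j Xk \<bullet> y} = {column j X \<bullet> y', column j Xk \<bullet> y'})
        \<longrightarrow> Wstar X Xk W y = Wstar X Xk W y')"

text \<open>Law of y = X beta + eps, eps ~ N(0, sig^2 I_n).\<close>

definition gauss_law :: "real^'d^'n \<Rightarrow> real^'d \<Rightarrow> real \<Rightarrow> (real^'n) measure" where
  "gauss_law X beta sig =
     density lborel (\<lambda>y. ennreal ((2 * pi * power sig 2) powr (- real CARD('n) / 2)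
        * exp (- power (norm (y - X *v beta)) 2 / (2 * power sig 2))))"

end

theory Submission
  imports Defs
begin



lemma core:
  fixes W :: "real^'d::finite" and ord :: "nat \<Rightarrow> 'd" and psi :: "'d \<Rightarrow> real" and bt :: "real^'d"
  assumes bij: "bij_betw ord {1..CARD('d)} UNIV"
    and dec: "\<And>i i'. 1 \<le> i \<Longrightarrow> i < i' \<Longrightarrow> i' \<le> CARD('d) \<Longrightarrow> \<bar>W $ ord i'\<bar> < \<bar>W $ ord i\<bar>"
    and nz: "\<And>j. W$j \<noteq> 0"
    and sg: "\<And>j. (W$j > 0) \<longleftrightarrow> wh_ptilde psi bt j = 1/2"
  shows "kf_rej alpha W = wh_rej alpha ord psi bt"
proof -
  define d where "d = CARD('d)"
  define m where "m k = \<bar>W $ ord k\<bar>" for k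
  define pt where "pt j = wh_ptilde psi bt j" for j
  have sg2: "W$j < 0 \<longleftrightarrow> pt j = 1" for j
    using sg[of j] nz[of j] unfolding pt_def wh_ptilde_def by auto
  have sg1: "W$j > 0 \<longleftrightarrow> pt j = 1/2" for j using sg[of j] by (simp add: pt_def)
  have surj: "\<exists>i\<in>{1..d}. ord i = j" for j
    using bij unfolding bij_betw_def d_def by (metis UNIV_I imageE)
  have inj: "inj_on ord {1..d}" using bij unfolding bij_betw_def d_def by simp
  have leq: "m k \<le> m i \<longleftrightarrow> i \<le> k" if "i \<in> {1..d}" "k \<in> {1..d}" for i k
  proof (cases i k rule: linorder_cases)
    case less then show ?thesis using dec[of i k] that by (auto simp: m_def d_def)
  next
    case greater then show ?thesis using dec[of k i] that by (auto simp: m_def d_def)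
  qed simp
  have mpos: "m k > 0" for k using nz[of "ord k"] by (simp add: m_def)
  have S1: "{j. m k \<le> W$j} = ord ` {i\<in>{1..k}. pt (ord i) = 1/2}" if k: "k \<in> {1..d}" for k
  proof (intro set_eqI iffI)
    fix j assume "j \<in> {j. m k \<le> W$j}"
    then have h: "m k \<le> W$j" by simp
    obtain i where i: "i \<in> {1..d}" "ord i = j" using surj by blast
    have "W $ j > 0" using h mpos[of k] by linarith
    moreover have "m k \<le> m i" using h i \<open>W $ j > 0\<close> by (simp add: m_def)
    ultimately show "j \<in> ord ` {i\<in>{1..k}. pt (ord i) = 1/2}"
      using leq[OF i(1) k] i sg1 by auto
  next
    fix j assume "j \<in> ord ` {i\<in>{1..k}. pt (ord i) = 1/2}"
    then obtain i where i: "i \<in> {1..k}" "pt (ord i) = 1/2" "j = ord i" by auto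
    have id: "i \<in> {1..d}" using i k by auto
    have "W $ j > 0" using i sg1 by simp
    moreover have "m k \<le> m i" using leq[OF id k] i by simp
    ultimately show "j \<in> {j. m k \<le> W$j}" using i by (simp add: m_def)
  qed
  have S2: "{j. W$j \<le> - m k} = ord ` {i\<in>{1..k}. pt (ord i) = 1}" if k: "k \<in> {1..d}" for k
  proof (intro set_eqI iffI)
    fix j assume "j \<in> {j. W$j \<le> - m k}"
    then have h: "W$j \<le> - m k" by simp
    obtain i where i: "i \<in> {1..d}" "ord i = j" using surj by blast
    have "W $ j < 0" using h mpos[of k] by linarith
    moreover have "m k \<le> m i" using h i \<open>W $ j < 0\<close> by (simp add: m_def)
    ultimately show "j \<in> ord ` {i\<in>{1..k}. pt (ord i) = 1}"
      using leq[OF i(1) k] i sg2 by auto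
  next
    fix j assume "j \<in> ord ` {i\<in>{1..k}. pt (ord i) = 1}"
    then obtain i where i: "i \<in> {1..k}" "pt (ord i) = 1" "j = ord i" by auto
    have id: "i \<in> {1..d}" using i k by auto
    have "W $ j < 0" using i sg2 by simp
    moreover have "m k \<le> m i" using leq[OF id k] i by simp
    ultimately show "j \<in> {j. W$j \<le> - m k}" using i by (simp add: m_def)
  qed
  have C1: "card {j. m k \<le> W$j} = card {i\<in>{1..k}. pt (ord i) = 1/2}" if k: "k \<in> {1..d}" for k
    unfolding S1[OF k] by (rule card_image, rule inj_on_subset[OF inj]) (use k in auto)
  have C2: "card {j. W$j \<le> - m k} = card {i\<in>{1..k}. pt (ord i) = 1}" if k: "k \<in> {1..d}" for k
    unfolding S2[OF k] by (rule card_image, rule inj_on_subset[OF inj]) (use k in auto)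
  have OK: "kf_ok alpha W (m k) \<longleftrightarrow> wh_FDP ord psi bt k \<le> ereal alpha" if k: "k \<in> {1..d}" for k
    unfolding kf_ok_def wh_FDP_def Let_def C1[OF k] C2[OF k] pt_def by simp
  define T where "T = {\<bar>W $ j\<bar> | j. \<bar>W $ j\<bar> > 0}"
  have T: "T = m ` {1..d}"
    unfolding T_def m_def using surj nz by (auto simp: image_iff) metis
  define K where "K = {k. k \<le> d \<and> wh_FDP ord psi bt k \<le> ereal alpha}"
  have K0: "0 \<notin> K" unfolding K_def wh_FDP_def by simp
  have Ksub: "K \<subseteq> {1..d}" using K0 unfolding K_def by (auto simp: Suc_le_eq) (metis gr0I)
  have finK: "finite K" using Ksub finite_subset by blast
  have TK: "{t \<in> T. kf_ok alpha W t} = m ` K"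
  proof -
    have "{t \<in> T. kf_ok alpha W t} = m ` {k \<in> {1..d}. kf_ok alpha W (m k)}" unfolding T by auto
    also have "{k \<in> {1..d}. kf_ok alpha W (m k)} = K" using OK Ksub unfolding K_def by auto
    finally show ?thesis .
  qed
  have kh: "wh_khat alpha ord psi bt = (if K = {} then 0 else Max K)"
    unfolding wh_khat_def K_def[symmetric] d_def[symmetric]
    using finK by (auto simp: Max_insert)
  show ?thesis
  proof (cases "K = {}")
    case True
    then have "\<not> (\<exists>t\<in>T. kf_ok alpha W t)" using TK by auto
    then show ?thesis unfolding kf_rej_def wh_rej_def T_def[symmetric] Let_def kh using True by simp
  next
    case False
    have MK: "Max K \<in> K" using False finK by simp
    have MKd: "Max K \<in> {1..d}" using MK Ksub by auto
    have Min: "Min (m ` K) = m (Max K)"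
    proof (rule Min_eqI)
      show "finite (m ` K)" using finK by simp
      show "m (Max K) \<in> m ` K" using MK by simp
      fix t assume "t \<in> m ` K"
      then obtain k where k: "k \<in> K" "t = m k" by auto
      have "k \<le> Max K" using k finK by simp
      then show "m (Max K) \<le> t" using leq[OF _ MKd, of k] k Ksub by auto
    qed
    have ex: "\<exists>t\<in>T. kf_ok alpha W t" using TK False by auto
    have "kf_rej alpha W = {j. m (Max K) \<le> W$j}"
      unfolding kf_rej_def T_def[symmetric] Let_def TK Min using ex by simp
    also have "\<dots> = ord ` {i\<in>{1..Max K}. pt (ord i) = 1/2}" by (rule S1[OF MKd])
    also have "\<dots> = wh_rej alpha ord psi bt"
      unfolding wh_rej_def kh pt_def using False by auto
    finally show ?thesis .
  qed
qed




lemma mi_props: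
  fixes A :: "'a::field^'n^'n"
  assumes "invertible A"
  shows "A ** matrix_inv A = mat 1" "matrix_inv A ** A = mat 1"
  using someI_ex[OF assms[unfolded invertible_def]] unfolding matrix_inv_def by auto

lemma mi_unique:
  fixes A B :: "'a::field^'n^'n"
  assumes "A ** B = mat 1" "B ** A = mat 1"
  shows "matrix_inv A = B"
proof -
  have inv: "invertible A" using assms unfolding invertible_def by blast
  have "matrix_inv A = matrix_inv A ** (A ** B)" by (simp add: assms)
  also have "\<dots> = (matrix_inv A ** A) ** B" by (simp add: matrix_mul_assoc)
  also have "\<dots> = B" by (simp add: mi_props[OF inv])
  finally show ?thesis .
qed

lemma diag_mult:
  fixes A B :: "real^'n^'n"
  assumes "\<And>i j. i \<noteq> j \<Longrightarrow> A$i$j = 0"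
  shows "(A ** B) $ i $ j = A$i$i * B$i$j"
proof -
  have "(A ** B) $ i $ j = (\<Sum>k\<in>UNIV. A$i$k * B$k$j)" by (simp add: matrix_matrix_mult_def)
  also have "\<dots> = A$i$i * B$i$j"
    by (subst sum.remove[of UNIV i]) (auto simp: assms intro!: sum.neutral)
  finally show ?thesis .
qed

lemma diag_inv:
  fixes A :: "real^'n^'n"
  assumes off: "\<And>i j. i \<noteq> j \<Longrightarrow> A$i$j = 0" and nz: "\<And>i. A$i$i \<noteq> 0"
  shows "matrix_inv A = (\<chi> i j. if i = j then inverse (A$i$i) else 0)"
proof (rule mi_unique)
  let ?B = "(\<chi> i j. if i = j then inverse (A$i$i) else 0) :: real^'n^'n"
  show "A ** ?B = mat 1"
    by (simp add: vec_eq_iff diag_mult[OF off] mat_def nz)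
  have offB: "\<And>i j. i \<noteq> j \<Longrightarrow> ?B$i$j = 0" by simp
  show "?B ** A = mat 1"
    by (simp add: vec_eq_iff diag_mult[OF offB] mat_def nz off)
qed

lemma diag_mv:
  fixes c :: "'n::finite \<Rightarrow> real"
  shows "((\<chi> i j. if i = j then c i else 0) *v v) $ j = c j * v $ j"
proof -
  have "((\<chi> i j. if i = j then c i else 0) *v v) $ j = (\<Sum>k\<in>UNIV. (if j = k then c j else 0) * v$k)"
    by (simp add: matrix_vector_mult_def)
  also have "\<dots> = c j * v $ j"
    by (subst sum.remove[of UNIV j]) (auto intro!: sum.neutral)
  finally show ?thesis .
qed

lemma transp_mv: "(transpose A *v y) $ j = column j A \<bullet> (y::real^'n)"
  by (simp add: matrix_vector_mult_def transpose_def column_def inner_vec_def mult.commute)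

lemma transp_mm: "(transpose A ** B) $ i $ j = column i A \<bullet> column j (B::real^'d^'n)"
  by (simp add: matrix_matrix_mult_def transpose_def column_def inner_vec_def)

lemma column_diff: "column j (A - B) = column j A - column j (B::real^'d^'n)"
  by (simp add: column_def vec_eq_iff)

lemma gram_invertible:
  fixes X :: "real^'d^'n"
  assumes "rank X = CARD('d)"
  shows "invertible (transpose X ** X)"
proof -
  have injX: "inj ((*v) X)" using assms full_rank_injective by blast
  have "inj ((*v) (transpose X ** X))"
  proof (subst linear_injective_0)
    show "linear ((*v) (transpose X ** X))" by (simp add: matrix_vector_mul_linear)
    show "\<forall>x. (transpose X ** X) *v x = 0 \<longrightarrow> x = 0"
    proof (intro allI impI)
      fix v assume h: "(transpose X ** X) *v v = 0"
      have "(X *v v) \<bullet> (X *v v) = v \<bullet> ((transpose X ** X) *v v)"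
        by (metis dot_lmul_matrix inner_commute matrix_vector_mul_assoc transpose_matrix_vector)
      then have "X *v v = 0" using h by simp
      then show "v = 0" using injX by (metis injD matrix_vector_mult_0_right)
    qed
  qed
  then show ?thesis using matrix_left_invertible_injective invertible_left_inverse by blast
qed




lemma formulas:
  fixes X Xk :: "real^'d^'n" and D :: "real^'d^'d"
  assumes full_rank: "rank X = CARD('d)" and knock: "is_knockoff X Xk D"
  shows "wh_betatilde X (omega_of X Xk D) y $ j = ((column j X - column j Xk) \<bullet> y) / D$j$j"
    and "wh_xi X (Delta_of D) (omega_of X Xk D) y $ j = (column j X \<bullet> y + column j Xk \<bullet> y) / 2"
    and "column j X \<noteq> column j Xk"
    and "D$j$j > 0"
proof -
  have off: "\<And>i j. i \<noteq> j \<Longrightarrow> D$i$j = 0" and pos: "\<And>i. D$i$i > 0"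
    using knock unfolding is_knockoff_def diag_pos_def by auto
  have nz: "\<And>i. D$i$i \<noteq> 0" using pos by (metis less_irrefl)
  show "D$j$j > 0" by (rule pos)
  have iD: "matrix_inv D = (\<chi> i j. if i = j then inverse (D$i$i) else 0)" by (rule diag_inv[OF off nz])
  have Dl: "Delta_of D = (\<chi> i j. if i = j then 2 * inverse (D$i$i) else 0)"
    unfolding Delta_of_def iD by (simp add: vec_eq_iff)
  have iDl: "matrix_inv (Delta_of D) = (\<chi> i j. if i = j then inverse (2 * inverse (D$i$i)) else 0)"
  proof -
    let ?A = "(\<chi> i j. if i = j then 2 * inverse (D$i$i) else 0) :: real^'d^'d"
    have "matrix_inv ?A = (\<chi> i j. if i = j then inverse (?A$i$i) else 0)"
      by (rule diag_inv) (auto simp: nz)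
    then show ?thesis unfolding Dl by (simp add: vec_eq_iff)
  qed
  have bt: "wh_betatilde X (omega_of X Xk D) y = matrix_inv D *v (transpose (X - Xk) *v y)"
    unfolding wh_betatilde_def omega_of_def by simp
  show btj: "wh_betatilde X (omega_of X Xk D) y $ j = ((column j X - column j Xk) \<bullet> y) / D$j$j"
    unfolding bt iD diag_mv transp_mv column_diff by (simp add: field_simps)
  define G where "G = transpose X ** X"
  have Ginv: "invertible G" unfolding G_def by (rule gram_invertible[OF full_rank])
  have S: "Sigma_of X = matrix_inv G" unfolding Sigma_of_def G_def ..
  have iS: "matrix_inv (Sigma_of X) = G"
    unfolding S by (rule mi_unique) (simp_all add: mi_props[OF Ginv])
  have "matrix_inv (Sigma_of X) *v betahat X y = transpose X *v y"
  proof -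
    have "matrix_inv (Sigma_of X) *v betahat X y = G *v (matrix_inv G *v (transpose X *v y))"
      unfolding betahat_def iS by (simp add: S)
    also have "\<dots> = transpose X *v y" by (simp add: matrix_vector_mul_assoc mi_props[OF Ginv])
    finally show ?thesis .
  qed
  then have xi: "wh_xi X (Delta_of D) (omega_of X Xk D) y
      = transpose X *v y - matrix_inv (Delta_of D) *v wh_betatilde X (omega_of X Xk D) y"
    unfolding wh_xi_def by simp
  show "wh_xi X (Delta_of D) (omega_of X Xk D) y $ j = (column j X \<bullet> y + column j Xk \<bullet> y) / 2"
    unfolding xi vector_minus_component iDl diag_mv btj transp_mv
    using nz[of j] by (simp add: field_simps inner_diff_left)
  show "column j X \<noteq> column j Xk"
  proof
    assume h: "column j X = column j Xk"
    have "(transpose Xk ** X) $ j $ j = (transpose X ** X) $ j $ j"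
      unfolding transp_mm h ..
    moreover have "transpose Xk ** X = transpose X ** X - D" using knock unfolding is_knockoff_def by simp
    ultimately show False using nz[of j] by simp
  qed
qed




lemma sort_exists:
  fixes v :: "'d::finite \<Rightarrow> real"
  assumes injv: "inj v"
  shows "\<exists>f. bij_betw f {1..CARD('d)} UNIV \<and>
     (\<forall>i i'. 1 \<le> i \<longrightarrow> i < i' \<longrightarrow> i' \<le> CARD('d) \<longrightarrow> v (f i') < v (f i))"
proof -
  define d where "d = CARD('d)"
  define rk where "rk j = card {k. v j < v k} + 1" for j
  have anti: "rk j' < rk j" if "v j < v j'" for j j'
  proof -
    have "{k. v j' < v k} \<subset> {k. v j < v k}" using that by auto
    then have "card {k. v j' < v k} < card {k. v j < v k}" by (rule psubset_card_mono[rotated]) simp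
    then show ?thesis by (simp add: rk_def)
  qed
  have injr: "inj rk"
  proof (rule injI)
    fix j j' assume "rk j = rk j'"
    then show "j = j'" using anti[of j j'] anti[of j' j] injv
      by (metis inj_eq less_irrefl linorder_neqE_linordered_idom)
  qed
  have rng: "rk ` UNIV \<subseteq> {1..d}"
  proof
    fix x assume "x \<in> rk ` UNIV"
    then obtain j where j: "x = rk j" by auto
    have "{k. v j < v k} \<subseteq> UNIV - {j}" by auto
    then have "card {k. v j < v k} \<le> card (UNIV - {j} :: 'd set)" by (rule card_mono[rotated]) simp
    also have "\<dots> = d - 1" by (simp add: d_def card_Diff_singleton)
    finally have "card {k. v j < v k} \<le> d - 1" .
    moreover have "d > 0" by (simp add: d_def)
    ultimately show "x \<in> {1..d}" using j unfolding rk_def by simp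
  qed
  have "card (rk ` UNIV) = d" by (simp add: card_image[OF injr] d_def)
  then have img: "rk ` UNIV = {1..d}" using rng by (intro card_subset_eq) auto
  have bij: "bij_betw rk UNIV {1..d}" using injr img by (simp add: bij_betw_def)
  define f where "f = inv_into UNIV rk"
  have bo: "bij_betw f {1..d} UNIV" unfolding f_def by (rule bij_betw_inv_into[OF bij])
  have rko: "rk (f i) = i" if "i \<in> {1..d}" for i
    unfolding f_def using that img by (simp add: f_inv_into_f)
  have dec: "v (f i') < v (f i)" if "1 \<le> i" "i < i'" "i' \<le> d" for i i'
  proof (rule ccontr)
    assume "\<not> v (f i') < v (f i)"
    then have "v (f i) < v (f i') \<or> v (f i) = v (f i')" by auto
    then show False
    proof
      assume "v (f i) < v (f i')"
      then have "rk (f i') < rk (f i)" by (rule anti)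
      then show False using rko[of i] rko[of i'] that by auto
    next
      assume "v (f i) = v (f i')"
      then have "f i = f i'" using injv by (simp add: inj_eq)
      then show False using rko[of i] rko[of i'] that by (metis atLeastAtMost_iff le_trans less_imp_le_nat less_irrefl)
    qed
  qed
  show ?thesis using bo dec unfolding d_def by blast
qed

lemma gauss_meas: assumes sg: "sig \<noteq> 0" shows "(\<lambda>y. ennreal ((2 * pi * power sig 2) powr (- real CARD('n) / 2)
        * exp (- power (norm (y - X *v beta)) 2 / (2 * power sig 2)))) \<in> borel_measurable (lborel :: (real^'n) measure)"
proof -
  have "continuous_on UNIV (\<lambda>y::real^'n. ((2 * pi * power sig 2) powr (- real CARD('n) / 2)
        * exp (- power (norm (y - X *v beta)) 2 / (2 * power sig 2))))"
    by (intro continuous_intros) (use sg in auto)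
  then have "(\<lambda>y::real^'n. ((2 * pi * power sig 2) powr (- real CARD('n) / 2)
        * exp (- power (norm (y - X *v beta)) 2 / (2 * power sig 2)))) \<in> borel_measurable borel"
    by (rule borel_measurable_continuous_onI)
  then show ?thesis using measurable_compose[OF _ measurable_ennreal] by simp
qed

lemma AE_hyper:
  fixes c :: "real^'n"
  assumes "c \<noteq> 0" and sg: "sig \<noteq> 0"
  shows "AE y in gauss_law X beta sig. c \<bullet> y \<noteq> 0"
proof -
  have "negligible {y. c \<bullet> y = 0}" using negligible_hyperplane assms by blast
  then have "{y. c \<bullet> y = 0} \<in> null_sets lebesgue" by (simp add: negligible_iff_null_sets)
  moreover have "{y. c \<bullet> y = 0} \<in> sets lborel" using closed_hyperplane by simp
  ultimately have N: "{y. c \<bullet> y = 0} \<in> null_sets lborel" using null_sets_completion_iff by blast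
  have "AE y in lborel. c \<bullet> y \<noteq> 0" by (rule AE_I'[OF N]) auto
  then show ?thesis unfolding gauss_law_def
    by (subst AE_density[OF gauss_meas[OF sg]]) (auto elim: AE_mp)
qed



lemma pair_iff: "({a,b} = {a',b'}) = (a+b = a'+b' \<and> \<bar>a-b\<bar> = \<bar>a'-(b'::real)\<bar>)"
  unfolding doubleton_eq_iff abs_if by auto



theorem theorem1:
  fixes X Xk :: "real^'d^'n" and D :: "real^'d^'d"
    and beta :: "real^'d" and sig alpha :: real
  assumes n_ge: "CARD('n) \<ge> 2 * CARD('d)"
    and full_rank: "rank X = CARD('d)"
    and knock: "is_knockoff X Xk D"
    and sigma_pos: "sig > 0"
    and alpha: "0 < alpha" "alpha < 1"
  shows
    "(\<forall>ord psi. valid_impl ord psi \<longrightarrow>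
        (\<exists>W. unordered_pair_prop X Xk W \<and>
             (\<forall>y. kf_rej alpha (W y) =
                  whitening_rej alpha X (Delta_of D) (omega_of X Xk D) ord psi y)))
     \<and>
     (\<forall>W. unordered_pair_prop X Xk W \<and>
          (AE y in gauss_law X beta sig. (\<forall>j. \<bar>W y $ j\<bar> > 0) \<and> inj (\<lambda>j. \<bar>W y $ j\<bar>))
        \<longrightarrow> (\<exists>ord psi. valid_impl ord psi \<and>
              (AE y in gauss_law X beta sig. kf_rej alpha (W y) =
                  whitening_rej alpha X (Delta_of D) (omega_of X Xk D) ord psi y)))"
proof -
  define d where "d = CARD('d)"
  define bt where "bt y = wh_betatilde X (omega_of X Xk D) y" for y
  define xi where "xi y = wh_xi X (Delta_of D) (omega_of X Xk D) y" for y
  define c where "c j = column j X - column j Xk" for j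
  have F1: "bt y $ j = (c j \<bullet> y) / D$j$j" for y j
    unfolding bt_def c_def by (rule formulas(1)[OF full_rank knock])
  have F2: "xi y $ j = (column j X \<bullet> y + column j Xk \<bullet> y) / 2" for y j
    unfolding xi_def by (rule formulas(2)[OF full_rank knock])
  have F3: "c j \<noteq> 0" for j unfolding c_def using formulas(3)[OF full_rank knock] by simp
  have F4: "D$j$j > 0" for j using formulas(4)[OF full_rank knock] .
  have sgnbt: "sgn (bt y $ j) = sgn (c j \<bullet> y)" for y j
    unfolding F1 using F4[of j] by (auto simp: sgn_if zero_less_divide_iff divide_less_0_iff)
  have absbt: "\<bar>bt y $ j\<bar> = \<bar>c j \<bullet> y\<bar> / D$j$j" for y j
    unfolding F1 using F4[of j] by simp
  have Ws: "Wstar X Xk W y $ j = sgn (c j \<bullet> y) * W y $ j" for W y j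
    unfolding Wstar_def c_def by simp
  have key: "(\<forall>j. {column j X \<bullet> y, column j Xk \<bullet> y} = {column j X \<bullet> y', column j Xk \<bullet> y'})
      \<longleftrightarrow> xi y = xi y' \<and> vabs (bt y) = vabs (bt y')" for y y'
  proof -
    have pj: "{column j X \<bullet> y, column j Xk \<bullet> y} = {column j X \<bullet> y', column j Xk \<bullet> y'}
      \<longleftrightarrow> xi y $ j = xi y' $ j \<and> vabs (bt y) $ j = vabs (bt y') $ j" for j
    proof -
      have dj: "D$j$j > 0" by (rule F4)
      have "\<bar>c j \<bullet> y\<bar> / D$j$j = \<bar>c j \<bullet> y'\<bar> / D$j$j \<longleftrightarrow> \<bar>c j \<bullet> y\<bar> = \<bar>c j \<bullet> y'\<bar>"
        using dj by (simp add: divide_cancel_right)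
      then show ?thesis unfolding pair_iff F2 vabs_def vec_lambda_beta absbt
        using dj by (simp add: c_def inner_diff_left) linarith
    qed
    have "(\<forall>j. {column j X \<bullet> y, column j Xk \<bullet> y} = {column j X \<bullet> y', column j Xk \<bullet> y'})
      \<longleftrightarrow> (\<forall>j. xi y $ j = xi y' $ j \<and> vabs (bt y) $ j = vabs (bt y') $ j)"
      using pj by blast
    then show ?thesis by (auto simp: vec_eq_iff)
  qed
  have partA: "\<exists>W. unordered_pair_prop X Xk W \<and>
             (\<forall>y. kf_rej alpha (W y) =
                  whitening_rej alpha X (Delta_of D) (omega_of X Xk D) ord psi y)"
    if vi: "valid_impl ord psi" for ord psi
  proof -
    define Or where "Or y = ord (xi y) (vabs (bt y))" for y
    define Ps where "Ps y = psi (xi y) (vabs (bt y))" for y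
    define pos where "pos y = inv_into {1..d} (Or y)" for y
    define W where "W y = (\<chi> j. (if wh_ptilde (Ps y) (bt y) j = 1/2 then 1 else -1) * (real d + 1 - real (pos y j)))" for y
    have bijO: "bij_betw (Or y) {1..d} UNIV" for y using vi unfolding valid_impl_def Or_def d_def by blast
    have Ps1: "Ps y j \<in> {-1, 1}" for y j using vi unfolding valid_impl_def Ps_def by blast
    have posin: "pos y j \<in> {1..d}" for y j
      unfolding pos_def using bijO[of y] by (metis UNIV_I bij_betw_def inv_into_into)
    have posO: "pos y (Or y i) = i" if "i \<in> {1..d}" for y i
      unfolding pos_def using bijO[of y] that by (simp add: bij_betw_def inv_into_f_f)
    have Wsf: "Wstar X Xk W y $ j = (if bt y $ j = 0 then 0 else Ps y j * (real d + 1 - real (pos y j)))" for y j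
    proof -
      have "Wstar X Xk W y $ j = sgn (bt y $ j) * W y $ j" unfolding Ws sgnbt ..
      also have "\<dots> = (if bt y $ j = 0 then 0 else Ps y j * (real d + 1 - real (pos y j)))"
        using Ps1[of y j] unfolding W_def wh_ptilde_def
        by (cases "bt y $ j > 0"; cases "Ps y j = 1") (auto simp: sgn_if)
      finally show ?thesis .
    qed
    have upp: "unordered_pair_prop X Xk W"
      unfolding unordered_pair_prop_def
    proof (intro allI impI)
      fix y y' assume "\<forall>j. {column j X \<bullet> y, column j Xk \<bullet> y} = {column j X \<bullet> y', column j Xk \<bullet> y'}"
      then have e: "xi y = xi y'" "vabs (bt y) = vabs (bt y')" using key by blast+
      have "Or y = Or y'" "Ps y = Ps y'" "pos y = pos y'" unfolding Or_def Ps_def pos_def e by simp_all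
      moreover have "bt y $ j = 0 \<longleftrightarrow> bt y' $ j = 0" for j
        using e(2) unfolding vabs_def vec_eq_iff by (metis abs_0_eq vec_lambda_beta)
      ultimately show "Wstar X Xk W y = Wstar X Xk W y'" unfolding vec_eq_iff Wsf by simp
    qed
    have rej: "kf_rej alpha (W y) = whitening_rej alpha X (Delta_of D) (omega_of X Xk D) ord psi y" for y
    proof -
      have "kf_rej alpha (W y) = wh_rej alpha (Or y) (Ps y) (bt y)"
      proof (rule core)
        show "bij_betw (Or y) {1..CARD('d)} UNIV" using bijO d_def by simp
        have absW: "\<bar>W y $ j\<bar> = real d + 1 - real (pos y j)" for j
          using posin[of y j] unfolding W_def by auto
        show "\<bar>W y $ Or y i'\<bar> < \<bar>W y $ Or y i\<bar>" if "1 \<le> i" "i < i'" "i' \<le> CARD('d)" for i i'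
          unfolding absW using that posO[of i y] posO[of i' y] by (simp add: d_def)
        show "W y $ j \<noteq> 0" for j using posin[of y j] unfolding W_def by auto
        show "(W y $ j > 0) \<longleftrightarrow> wh_ptilde (Ps y) (bt y) j = 1/2" for j
          using posin[of y j] unfolding W_def by (auto simp: wh_ptilde_def)
      qed
      then show ?thesis unfolding whitening_rej_def Let_def Or_def Ps_def bt_def xi_def .
    qed
    show ?thesis using upp rej by blast
  qed
  have partB: "\<exists>ord psi. valid_impl ord psi \<and>
              (AE y in gauss_law X beta sig. kf_rej alpha (W y) =
                  whitening_rej alpha X (Delta_of D) (omega_of X Xk D) ord psi y)"
    if upp: "unordered_pair_prop X Xk W"
      and ae: "AE y in gauss_law X beta sig. (\<forall>j. \<bar>W y $ j\<bar> > 0) \<and> inj (\<lambda>j. \<bar>W y $ j\<bar>)" for W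
  proof -
    define good where "good y = ((\<forall>j. \<bar>W y $ j\<bar> > 0) \<and> inj (\<lambda>j. \<bar>W y $ j\<bar>) \<and> (\<forall>j. bt y $ j \<noteq> 0))" for y
    define y0 where "y0 a b = (SOME y. good y \<and> xi y = a \<and> vabs (bt y) = b)" for a b
    define v where "v a b = (\<lambda>j. \<bar>W (y0 a b) $ j\<bar>)" for a b
    define P where "P a b f = (bij_betw f {1..d} UNIV \<and>
        (\<forall>i i'. 1 \<le> i \<longrightarrow> i < i' \<longrightarrow> i' \<le> d \<longrightarrow> v a b (f i') < v a b (f i)))" for a b f
    define ord :: "real^'d \<Rightarrow> real^'d \<Rightarrow> nat \<Rightarrow> 'd" where
      "ord a b = (if \<exists>f. P a b f then SOME f. P a b f else SOME f. bij_betw f {1..d} UNIV)" for a b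
    define psi :: "real^'d \<Rightarrow> real^'d \<Rightarrow> 'd \<Rightarrow> real" where
      "psi a b j = (if Wstar X Xk W (y0 a b) $ j > 0 then 1 else -1)" for a b j
    have exbij: "\<exists>f. bij_betw f {1..d} (UNIV::'d set)"
      by (rule finite_same_card_bij) (simp_all add: d_def)
    have valid: "valid_impl ord psi"
      unfolding valid_impl_def
    proof (intro allI conjI)
      fix a b
      show "bij_betw (ord a b) {1..CARD('d)} UNIV"
      proof (cases "\<exists>f. P a b f")
        case True
        have "ord a b = (SOME f. P a b f)" by (simp only: ord_def if_P[OF True])
        moreover have "P a b (SOME f. P a b f)" by (rule someI_ex[OF True])
        ultimately show ?thesis by (simp add: P_def d_def)
      next
        case False
        have "ord a b = (SOME f. bij_betw f {1..d} UNIV)" by (simp only: ord_def if_not_P[OF False])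
        then show ?thesis using someI_ex[OF exbij] by (simp add: d_def)
      qed
      show "psi a b j \<in> {-1, 1}" for j unfolding psi_def by simp
    qed
    have aeh: "AE y in gauss_law X beta sig. \<forall>j\<in>UNIV. c j \<bullet> y \<noteq> 0"
      by (rule AE_finite_allI, simp, rule AE_hyper[OF F3], use sigma_pos in simp)
    have aeg: "AE y in gauss_law X beta sig. good y"
      using ae aeh
    proof eventually_elim
      case (elim y)
      then show ?case unfolding good_def F1 using F4 by (simp add: less_imp_neq[symmetric])
    qed
    have main: "kf_rej alpha (W y) = whitening_rej alpha X (Delta_of D) (omega_of X Xk D) ord psi y"
      if gy: "good y" for y
    proof -
      define a where "a = xi y"
      define b where "b = vabs (bt y)"
      have ex: "\<exists>y'. good y' \<and> xi y' = a \<and> vabs (bt y') = b" using gy a_def b_def by blast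
      have y0p: "good (y0 a b) \<and> xi (y0 a b) = a \<and> vabs (bt (y0 a b)) = b"
        unfolding y0_def by (rule someI_ex[OF ex])
      have "xi y = xi (y0 a b) \<and> vabs (bt y) = vabs (bt (y0 a b))" using y0p a_def b_def by simp
      then have WsE: "Wstar X Xk W y = Wstar X Xk W (y0 a b)"
        using upp key unfolding unordered_pair_prop_def by blast
      have cnz: "c j \<bullet> y \<noteq> 0" for j using gy unfolding good_def F1 by auto
      have cnz0: "c j \<bullet> y0 a b \<noteq> 0" for j using y0p unfolding good_def F1 by auto
      have absWs: "\<bar>Wstar X Xk W y' $ j\<bar> = \<bar>W y' $ j\<bar>" if "c j \<bullet> y' \<noteq> 0" for y' j
        unfolding Ws using that by (simp add: abs_mult abs_sgn_eq)
      have vE: "v a b = (\<lambda>j. \<bar>W y $ j\<bar>)"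
        unfolding v_def using absWs[OF cnz] absWs[OF cnz0] WsE by metis
      have injv: "inj (v a b)" using gy unfolding vE good_def by simp
      have exP: "\<exists>f. P a b f" unfolding P_def d_def using sort_exists[OF injv] .
      have Pord: "P a b (ord a b)" unfolding ord_def if_P[OF exP] by (rule someI_ex[OF exP])
      have psiE: "psi a b j = (if sgn (c j \<bullet> y) * W y $ j > 0 then 1 else -1)" for j
        unfolding psi_def WsE[symmetric] Ws ..
      have "kf_rej alpha (W y) = wh_rej alpha (ord a b) (psi a b) (bt y)"
      proof (rule core)
        show "bij_betw (ord a b) {1..CARD('d)} UNIV" using Pord unfolding P_def d_def by simp
        show "\<bar>W y $ ord a b i'\<bar> < \<bar>W y $ ord a b i\<bar>" if "1 \<le> i" "i < i'" "i' \<le> CARD('d)" for i i'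
          using Pord that unfolding P_def vE d_def by blast
        show "W y $ j \<noteq> 0" for j using gy unfolding good_def by force
        show "(W y $ j > 0) \<longleftrightarrow> wh_ptilde (psi a b) (bt y) j = 1/2" for j
          using cnz[of j] gy unfolding wh_ptilde_def psiE sgnbt good_def
          by (cases "c j \<bullet> y > 0"; cases "W y $ j > 0") (auto simp: sgn_if mult_less_0_iff zero_less_mult_iff)
      qed
      then show ?thesis unfolding whitening_rej_def Let_def a_def b_def bt_def xi_def .
    qed
    show ?thesis using valid aeg main by (blast intro: AE_mp)
  qed
  show ?thesis using partA partB by blast
qed


end
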